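(* Let $(X,d_X)$ be a discrete countable metric space, $Y$ a countable set, and $d_1,d_2$ two metrics on $X\sqcup Y$ with $d_1|_X=d_2|_X=d_X$ and $d_1|_Y=d_2|_Y$. Then $d_1$ and $d_2$ are coarsely equivalent if and only if $M_{Y,d_1}=M_{Y,d_2}$ (as subsets of $\mathbb B(H_X,H_Y)$).
   Context: $H_X=\ell^2(X)$, $H_Y=\ell^2(Y)$ with standard bases $\{\delta_x\}$, $\{\delta_y\}$. For a metric $d$ on $X\sqcup Y$ extending $d_X$, a bounded operator $T:H_X\to H_Y$ has propagation at most $L$ if $d(x,y)\ge L$ implies $(\delta_y,T\delta_x)=0$; $M_{Y,d}$ is the norm closure in $\mathbb B(H_X,H_Y)$ of bounded operators $H_X\to H_Y$ of finite propagation. Two metrics $d_1,d_2$ on a set $Z$ are coarsely equivalent if there is a monotonically increasing function $\varphi:[0,\infty)\to[0,\infty)$ with $\lim_{t\to\infty}\varphi(t)=\infty$ such that $d_1(z,z')\le\varphi(d_2(z,z'))$ and $d_2(z,z')\le\varphi(d_1(z,z'))$ for all $z,z'\in Z$. *)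

theory Defs
  imports "HOL-Analysis.Analysis"
begin

definition is_metric :: "('z \<Rightarrow> 'z \<Rightarrow> real) \<Rightarrow> bool" where
  "is_metric d \<longleftrightarrow>
     (\<forall>z z'. 0 \<le> d z z') \<and> (\<forall>z z'. d z z' = 0 \<longleftrightarrow> z = z') \<and>
     (\<forall>z z'. d z z' = d z' z) \<and> (\<forall>z z' z''. d z z'' \<le> d z z' + d z' z'')"

definition discrete_metric :: "('z \<Rightarrow> 'z \<Rightarrow> real) \<Rightarrow> bool" where
  "discrete_metric d \<longleftrightarrow> (\<forall>z. \<exists>e>0. \<forall>z'. d z z' < e \<longrightarrow> z' = z)"

definition ell2 :: "('a \<Rightarrow> complex) set" where
  "ell2 = {f. (\<lambda>x. (norm (f x))\<^sup>2) summable_on UNIV}"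

definition ell2_norm :: "('a \<Rightarrow> complex) \<Rightarrow> real" where
  "ell2_norm f = sqrt (\<Sum>\<^sub>\<infinity>x. (norm (f x))\<^sup>2)"

definition delta :: "'a \<Rightarrow> 'a \<Rightarrow> complex" where
  "delta x = (\<lambda>x'. if x' = x then 1 else 0)"

text \<open>Bounded linear operators ell^2(X) -> ell^2(Y); only their values on ell^2(X) matter.\<close>
definition bounded_op :: "(('a \<Rightarrow> complex) \<Rightarrow> ('b \<Rightarrow> complex)) \<Rightarrow> bool" where
  "bounded_op T \<longleftrightarrow>
     (\<forall>f\<in>ell2. T f \<in> ell2) \<and>
     (\<forall>f\<in>ell2. \<forall>g\<in>ell2. T (\<lambda>x. f x + g x) = (\<lambda>y. T f y + T g y)) \<and>
     (\<forall>f\<in>ell2. \<forall>c. T (\<lambda>x. c * f x) = (\<lambda>y. c * T f y)) \<and>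
     (\<exists>C. \<forall>f\<in>ell2. ell2_norm (T f) \<le> C * ell2_norm f)"

definition has_propagation_le ::
  "('a + 'b \<Rightarrow> 'a + 'b \<Rightarrow> real) \<Rightarrow> real \<Rightarrow> (('a \<Rightarrow> complex) \<Rightarrow> ('b \<Rightarrow> complex)) \<Rightarrow> bool" where
  "has_propagation_le d L T \<longleftrightarrow> (\<forall>x y. d (Inl x) (Inr y) \<ge> L \<longrightarrow> T (delta x) y = 0)"

definition finite_propagation ::
  "('a + 'b \<Rightarrow> 'a + 'b \<Rightarrow> real) \<Rightarrow> (('a \<Rightarrow> complex) \<Rightarrow> ('b \<Rightarrow> complex)) \<Rightarrow> bool" where
  "finite_propagation d T \<longleftrightarrow> (\<exists>L. has_propagation_le d L T)"

text \<open>M_{Y,d}: norm closure in B(H_X,H_Y) of the bounded finite-propagation operators.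
  T lies in the closure iff for every eps > 0 there is such an S with operator norm of T - S
  at most eps.\<close>
definition M_space ::
  "('a + 'b \<Rightarrow> 'a + 'b \<Rightarrow> real) \<Rightarrow> (('a \<Rightarrow> complex) \<Rightarrow> ('b \<Rightarrow> complex)) set" where
  "M_space d = {T. bounded_op T \<and>
     (\<forall>\<epsilon>>0. \<exists>S. bounded_op S \<and> finite_propagation d S \<and>
        (\<forall>f\<in>ell2. ell2_norm (\<lambda>y. T f y - S f y) \<le> \<epsilon> * ell2_norm f))}"

definition coarsely_equivalent :: "('z \<Rightarrow> 'z \<Rightarrow> real) \<Rightarrow> ('z \<Rightarrow> 'z \<Rightarrow> real) \<Rightarrow> bool" where
  "coarsely_equivalent d1 d2 \<longleftrightarrow>
     (\<exists>\<phi>::real \<Rightarrow> real. mono_on {0..} \<phi> \<and> (\<forall>t\<ge>0. \<phi> t \<ge> 0) \<and> filterlim \<phi> at_top at_top \<and>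
        (\<forall>z z'. d1 z z' \<le> \<phi> (d2 z z') \<and> d2 z z' \<le> \<phi> (d1 z z')))"

end

theory Submission
  imports Defs
begin

lemma ell2_norm_nonneg: "ell2_norm f \<ge> 0"
  unfolding ell2_norm_def by (simp add: infsum_nonneg)

lemma delta_ell2: "delta x \<in> ell2"
proof -
  have "(\<lambda>x'. (norm (delta x x'))\<^sup>2) summable_on UNIV \<longleftrightarrow> (\<lambda>x'. (norm (delta x x'))\<^sup>2) summable_on {x}"
    by (rule summable_on_cong_neutral) (auto simp: delta_def)
  then show ?thesis unfolding ell2_def by simp
qed

lemma delta_norm: "ell2_norm (delta x) = 1"
proof -
  have "infsum (\<lambda>x'. (norm (delta x x'))\<^sup>2) UNIV = infsum (\<lambda>x'. (norm (delta x x'))\<^sup>2) {x}"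
    by (rule infsum_cong_neutral) (auto simp: delta_def)
  then show ?thesis unfolding ell2_norm_def by (simp add: delta_def)
qed

lemma ell2_diff:
  assumes "f \<in> ell2" "g \<in> ell2"
  shows "(\<lambda>y. f y - g y) \<in> ell2"
proof -
  have sf: "(\<lambda>y. (norm (f y))\<^sup>2) summable_on UNIV" and sg: "(\<lambda>y. (norm (g y))\<^sup>2) summable_on UNIV"
    using assms unfolding ell2_def by auto
  have s: "(\<lambda>y. 2 * (norm (f y))\<^sup>2 + 2 * (norm (g y))\<^sup>2) summable_on UNIV"
    by (intro summable_on_add summable_on_cmult_right sf sg)
  have le: "(norm (f y - g y))\<^sup>2 \<le> 2 * (norm (f y))\<^sup>2 + 2 * (norm (g y))\<^sup>2" for y
  proof -
    have "norm (f y - g y) \<le> norm (f y) + norm (g y)" by (rule norm_triangle_ineq4)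
    then have "(norm (f y - g y))\<^sup>2 \<le> (norm (f y) + norm (g y))\<^sup>2"
      by (simp add: power_mono)
    also have "\<dots> \<le> 2 * (norm (f y))\<^sup>2 + 2 * (norm (g y))\<^sup>2"
    proof -
      have "(norm (f y) + norm (g y))\<^sup>2 = 2 * (norm (f y))\<^sup>2 + 2 * (norm (g y))\<^sup>2 - (norm (f y) - norm (g y))\<^sup>2"
        by (simp add: power2_eq_square algebra_simps)
      moreover have "0 \<le> (norm (f y) - norm (g y))\<^sup>2" by simp
      ultimately show ?thesis by linarith
    qed
    finally show ?thesis .
  qed
  show ?thesis unfolding ell2_def
    by (auto intro!: summable_on_comparison_test[OF s] le)
qed

lemma ell2_norm_ge:
  assumes "f \<in> ell2"
  shows "norm (f y) \<le> ell2_norm f"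
proof -
  have s: "(\<lambda>y. (norm (f y))\<^sup>2) summable_on UNIV" using assms unfolding ell2_def by auto
  have "infsum (\<lambda>y. (norm (f y))\<^sup>2) {y} \<le> infsum (\<lambda>y. (norm (f y))\<^sup>2) UNIV"
    by (rule infsum_mono2) (auto simp: s)
  then have "(norm (f y))\<^sup>2 \<le> infsum (\<lambda>y. (norm (f y))\<^sup>2) UNIV" by simp
  then show ?thesis unfolding ell2_norm_def
    by (simp add: real_le_rsqrt)
qed

definition pop :: "('b \<Rightarrow> 'a) \<Rightarrow> 'b set \<Rightarrow> (('a \<Rightarrow> complex) \<Rightarrow> ('b \<Rightarrow> complex))" where
  "pop g B h = (\<lambda>y. if y \<in> B then h (g y) else 0)"

lemma pop_ell2:
  assumes inj: "inj_on g B" and h: "h \<in> ell2"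
  shows "pop g B h \<in> ell2 \<and> ell2_norm (pop g B h) \<le> ell2_norm h"
proof -
  define q where "q = (\<lambda>x. (norm (h x))\<^sup>2)"
  have qs: "q summable_on UNIV" using h unfolding ell2_def q_def by auto
  have "q summable_on g ` B" by (rule summable_on_subset_banach[OF qs]) auto
  then have qg: "(q \<circ> g) summable_on B" using summable_on_reindex[OF inj] by blast
  have eq: "(\<lambda>y. (norm (pop g B h y))\<^sup>2) summable_on UNIV \<longleftrightarrow> (q \<circ> g) summable_on B"
    by (rule summable_on_cong_neutral) (auto simp: pop_def q_def)
  have eq2: "infsum (\<lambda>y. (norm (pop g B h y))\<^sup>2) UNIV = infsum (q \<circ> g) B"
    by (rule infsum_cong_neutral) (auto simp: pop_def q_def)
  also have "\<dots> = infsum q (g ` B)" by (rule infsum_reindex[OF inj, symmetric])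
  also have "\<dots> \<le> infsum q UNIV"
  proof (rule infsum_mono2)
    show "q summable_on g ` B" by fact
    show "q summable_on UNIV" by fact
  qed (auto simp: q_def)
  finally have "infsum (\<lambda>y. (norm (pop g B h y))\<^sup>2) UNIV \<le> infsum q UNIV" .
  then show ?thesis using eq qg unfolding ell2_def ell2_norm_def q_def
    by (auto intro: real_sqrt_le_mono)
qed

lemma pop_bounded:
  assumes inj: "inj_on g B"
  shows "bounded_op (pop g B)"
  unfolding bounded_op_def
proof (intro conjI ballI allI)
  show "\<And>f. f \<in> ell2 \<Longrightarrow> pop g B f \<in> ell2" using pop_ell2[OF inj] by blast
  show "\<And>f ga. pop g B (\<lambda>x. f x + ga x) = (\<lambda>y. pop g B f y + pop g B ga y)"
    by (auto simp: pop_def)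
  show "\<And>f c. pop g B (\<lambda>x. c * f x) = (\<lambda>y. c * pop g B f y)"
    by (auto simp: pop_def)
  show "\<exists>C. \<forall>f\<in>ell2. ell2_norm (pop g B f) \<le> C * ell2_norm f"
    using pop_ell2[OF inj] by (intro exI[of _ 1]) auto
qed


lemma fp_transfer:
  assumes mono: "mono_on {0..} \<phi>"
    and nn: "\<And>z z'. 0 \<le> d1 z z'"
    and le: "\<And>z z'. d2 z z' \<le> \<phi> (d1 z z')"
    and fp: "finite_propagation d1 S"
  shows "finite_propagation d2 S"
proof -
  obtain L where L: "has_propagation_le d1 L S" using fp unfolding finite_propagation_def by blast
  have "has_propagation_le d2 (\<phi> (max L 0) + 1) S"
    unfolding has_propagation_le_def
  proof (intro allI impI)
    fix x y
    assume a: "\<phi> (max L 0) + 1 \<le> d2 (Inl x) (Inr y)"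
    show "S (delta x) y = 0"
    proof (rule ccontr)
      assume "S (delta x) y \<noteq> 0"
      then have "d1 (Inl x) (Inr y) < L" using L unfolding has_propagation_le_def by force
      then have "d1 (Inl x) (Inr y) \<le> max L 0" by simp
      then have "\<phi> (d1 (Inl x) (Inr y)) \<le> \<phi> (max L 0)"
        using mono nn[of "Inl x" "Inr y"] by (auto intro: mono_onD)
      then show False using a le[of "Inl x" "Inr y"] by linarith
    qed
  qed
  then show ?thesis unfolding finite_propagation_def by blast
qed

lemma coarse_from_bdd:
  fixes d1 d2 :: "'z \<Rightarrow> 'z \<Rightarrow> real"
  assumes m1: "is_metric d1" and m2: "is_metric d2"
    and b12: "\<And>t. bdd_above {d1 z z' | z z'. d2 z z' \<le> t}"
    and b21: "\<And>t. bdd_above {d2 z z' | z z'. d1 z z' \<le> t}"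
  shows "coarsely_equivalent d1 d2"
proof -
  have nn1: "\<And>z z'. 0 \<le> d1 z z'" and z1: "\<And>z. d1 z z = 0"
    using m1 unfolding is_metric_def by auto
  have nn2: "\<And>z z'. 0 \<le> d2 z z'" and z2: "\<And>z. d2 z z = 0"
    using m2 unfolding is_metric_def by auto
  define A where "A t = {d1 z z' | z z'. d2 z z' \<le> t}" for t
  define B where "B t = {d2 z z' | z z'. d1 z z' \<le> t}" for t
  define \<phi> where "\<phi> t = Sup (A \<bar>t\<bar>) + Sup (B \<bar>t\<bar>) + \<bar>t\<bar>" for t
  obtain z0 :: 'z where True by blast
  have A0: "0 \<in> A t" if "t \<ge> 0" for t
    unfolding A_def using that z1 z2 by (auto intro!: exI[of _ z0])
  have B0: "0 \<in> B t" if "t \<ge> 0" for t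
    unfolding B_def using that z1 z2 by (auto intro!: exI[of _ z0])
  have Ab: "bdd_above (A t)" for t unfolding A_def by (rule b12)
  have Bb: "bdd_above (B t)" for t unfolding B_def by (rule b21)
  have Apos: "0 \<le> Sup (A \<bar>t\<bar>)" for t using A0[of "\<bar>t\<bar>"] Ab by (auto intro: cSup_upper)
  have Bpos: "0 \<le> Sup (B \<bar>t\<bar>)" for t using B0[of "\<bar>t\<bar>"] Bb by (auto intro: cSup_upper)
  have mono: "mono_on {0..} \<phi>"
  proof (rule mono_onI)
    fix s t :: real assume st: "s \<in> {0..}" "t \<in> {0..}" "s \<le> t"
    have "A s \<subseteq> A t" "B s \<subseteq> B t" using st unfolding A_def B_def by fastforce+
    then have "Sup (A s) \<le> Sup (A t)" "Sup (B s) \<le> Sup (B t)"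
      using A0[of s] B0[of s] Ab Bb st by (auto intro!: cSup_subset_mono)
    then show "\<phi> s \<le> \<phi> t" using st unfolding \<phi>_def by auto
  qed
  have pos: "\<forall>t\<ge>0. \<phi> t \<ge> 0" unfolding \<phi>_def using Apos Bpos by (smt (verit))
  have lim: "filterlim \<phi> at_top at_top"
  proof (rule filterlim_at_top_mono[OF filterlim_ident])
    show "\<forall>\<^sub>F x in at_top. x \<le> \<phi> x"
      unfolding \<phi>_def using Apos Bpos by (intro always_eventually allI) (smt (verit))
  qed
  have le: "d1 z z' \<le> \<phi> (d2 z z') \<and> d2 z z' \<le> \<phi> (d1 z z')" for z z'
  proof
    have "d1 z z' \<in> A \<bar>d2 z z'\<bar>" unfolding A_def by fastforce
    then have "d1 z z' \<le> Sup (A \<bar>d2 z z'\<bar>)" using Ab by (auto intro: cSup_upper)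
    then show "d1 z z' \<le> \<phi> (d2 z z')" unfolding \<phi>_def using Bpos[of "d2 z z'"] by linarith
    have "d2 z z' \<in> B \<bar>d1 z z'\<bar>" unfolding B_def by fastforce
    then have "d2 z z' \<le> Sup (B \<bar>d1 z z'\<bar>)" using Bb by (auto intro: cSup_upper)
    then show "d2 z z' \<le> \<phi> (d1 z z')" unfolding \<phi>_def using Apos[of "d1 z z'"] by linarith
  qed
  show ?thesis unfolding coarsely_equivalent_def
    using mono pos lim le by blast
qed


lemma core:
  fixes d1 d2 :: "'a + 'b \<Rightarrow> 'a + 'b \<Rightarrow> real"
  assumes m1: "is_metric d1" and m2: "is_metric d2"
    and agX: "\<And>x x'. d1 (Inl x) (Inl x') = d2 (Inl x) (Inl x')"
    and agY: "\<And>y y'. d1 (Inr y) (Inr y') = d2 (Inr y) (Inr y')"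
    and unb: "\<not> bdd_above {d2 z z' | z z'. d1 z z' \<le> R}"
  shows "M_space d1 \<noteq> M_space d2"
proof -
  have sym1: "\<And>z z'. d1 z z' = d1 z' z" and tri1: "\<And>z z' z''. d1 z z'' \<le> d1 z z' + d1 z' z''"
    using m1 unfolding is_metric_def by auto
  have sym2: "\<And>z z'. d2 z z' = d2 z' z" and tri2: "\<And>z z' z''. d2 z z'' \<le> d2 z z' + d2 z' z''"
    using m2 unfolding is_metric_def by auto
  define F where "F x y = d2 (Inl x) (Inr y)" for x y
  define Pr where "Pr x y \<longleftrightarrow> d1 (Inl x) (Inr y) \<le> R" for x y
  have unb2: "\<exists>x y. Pr x y \<and> F x y > v" for v
  proof (rule ccontr)
    assume "\<not> (\<exists>x y. Pr x y \<and> F x y > v)"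
    then have K: "\<And>x y. Pr x y \<Longrightarrow> F x y \<le> v" by (meson not_le)
    have "bdd_above {d2 z z' | z z'. d1 z z' \<le> R}"
    proof (rule bdd_aboveI[of _ "max v R"])
      fix w assume "w \<in> {d2 z z' | z z'. d1 z z' \<le> R}"
      then obtain z z' where w: "w = d2 z z'" "d1 z z' \<le> R" by blast
      show "w \<le> max v R"
      proof (cases z; cases z')
        fix x x' assume "z = Inl x" "z' = Inl x'" then show ?thesis using w agX by auto
      next
        fix x y assume "z = Inl x" "z' = Inr y" then show ?thesis using w K[of x y]
          unfolding Pr_def F_def by auto
      next
        fix y x assume "z = Inr y" "z' = Inl x" then show ?thesis using w K[of x y]
          sym1[of "Inl x" "Inr y"] sym2[of "Inl x" "Inr y"]
          unfolding Pr_def F_def by auto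
      next
        fix y y' assume "z = Inr y" "z' = Inr y'" then show ?thesis using w agY by auto
      qed
    qed
    then show False using unb by blast
  qed
  define nxt where "nxt v = (SOME p. Pr (fst p) (snd p) \<and> F (fst p) (snd p) > v)" for v
  have nxt: "Pr (fst (nxt v)) (snd (nxt v)) \<and> F (fst (nxt v)) (snd (nxt v)) > v" for v
  proof -
    obtain x y where "Pr x y \<and> F x y > v" using unb2 by blast
    then have "\<exists>p. Pr (fst p) (snd p) \<and> F (fst p) (snd p) > v" by (intro exI[of _ "(x,y)"]) auto
    then show ?thesis unfolding nxt_def by (rule someI_ex)
  qed
  define c where "c = \<bar>2 * R\<bar> + 1"
  define p where "p = rec_nat (nxt 0) (\<lambda>n q. nxt (F (fst q) (snd q) + c))"
  have p0: "p 0 = nxt 0" and pS: "p (Suc n) = nxt (F (fst (p n)) (snd (p n)) + c)" for n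
    unfolding p_def by simp_all
  define xs where "xs n = fst (p n)" for n
  define ys where "ys n = snd (p n)" for n
  define G where "G n = F (xs n) (ys n)" for n
  have Pn: "Pr (xs n) (ys n)" for n
    by (cases n) (auto simp: xs_def ys_def p0 pS nxt)
  have GS: "G (Suc n) > G n + c" for n
    unfolding G_def xs_def ys_def pS using nxt by blast
  have c1: "c \<ge> 1" "2 * R < c" unfolding c_def by auto
  have Gmono: "G (m + Suc k) > G m + c" for m k
  proof (induction k)
    case 0 then show ?case using GS[of m] by simp
  next
    case (Suc k) then show ?case using GS[of "m + Suc k"] c1 by simp
  qed
  have Gless: "m < n \<Longrightarrow> G n > G m + c" for m n
    using Gmono[of m "n - m - 1"] by simp
  have Glin: "G n \<ge> G 0 + real n" for n
  proof (induction n)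
    case 0 then show ?case by simp
  next
    case (Suc n) then show ?case using GS[of n] c1 by simp
  qed
  have samex: "F x y' \<le> F x y + 2 * R" if "Pr x y" "Pr x y'" for x y y'
  proof -
    have "d2 (Inr y) (Inr y') = d1 (Inr y) (Inr y')" using agY by simp
    also have "\<dots> \<le> d1 (Inr y) (Inl x) + d1 (Inl x) (Inr y')" by (rule tri1)
    also have "\<dots> \<le> 2 * R" using that sym1[of "Inr y" "Inl x"] unfolding Pr_def by simp
    finally have "d2 (Inr y) (Inr y') \<le> 2 * R" .
    moreover have "F x y' \<le> F x y + d2 (Inr y) (Inr y')" unfolding F_def by (rule tri2)
    ultimately show ?thesis by simp
  qed
  have samey: "F x' y \<le> F x y + 2 * R" if "Pr x y" "Pr x' y" for x x' y
  proof -
    have "d2 (Inl x') (Inl x) = d1 (Inl x') (Inl x)" using agX by simp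
    also have "\<dots> \<le> d1 (Inl x') (Inr y) + d1 (Inr y) (Inl x)" by (rule tri1)
    also have "\<dots> \<le> 2 * R" using that sym1[of "Inr y" "Inl x"] unfolding Pr_def by simp
    finally have "d2 (Inl x') (Inl x) \<le> 2 * R" .
    moreover have "F x' y \<le> d2 (Inl x') (Inl x) + F x y" unfolding F_def by (rule tri2)
    ultimately show ?thesis by simp
  qed
  have injx0: "xs m \<noteq> xs n" if "m < n" for m n
  proof
    assume e: "xs m = xs n"
    have "Pr (xs m) (ys n)" using Pn[of n] e by simp
    then have "F (xs m) (ys n) \<le> F (xs m) (ys m) + 2 * R" using samex[of "xs m" "ys m" "ys n"] Pn[of m] by blast
    then have "G n \<le> G m + 2 * R" unfolding G_def using e by simp
    then show False using Gless[OF that] c1 by simp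
  qed
  have injy0: "ys m \<noteq> ys n" if "m < n" for m n
  proof
    assume e: "ys m = ys n"
    have "Pr (xs n) (ys m)" using Pn[of n] e by simp
    then have "F (xs n) (ys m) \<le> F (xs m) (ys m) + 2 * R" using samey[of "xs m" "ys m" "xs n"] Pn[of m] by blast
    then have "G n \<le> G m + 2 * R" unfolding G_def using e by simp
    then show False using Gless[OF that] c1 by simp
  qed
  have injx: "inj xs"
    by (rule injI) (metis injx0 linorder_neq_iff)
  have injy: "inj ys"
    by (rule injI) (metis injy0 linorder_neq_iff)
  define g where "g y = xs (inv ys y)" for y
  have gys: "g (ys n) = xs n" for n unfolding g_def using injy by simp
  have ginj: "inj_on g (range ys)"
    by (rule inj_onI) (auto simp: gys dest: injD[OF injx])
  define T where "T = pop g (range ys)"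
  have Tb: "bounded_op T" unfolding T_def by (rule pop_bounded[OF ginj])
  have T1: "T \<in> M_space d1"
    unfolding M_space_def
  proof (intro CollectI conjI allI impI Tb)
    fix \<epsilon> :: real assume "\<epsilon> > 0"
    have propT: "has_propagation_le d1 (R + 1) T"
      unfolding has_propagation_le_def
    proof (intro allI impI)
      fix x y assume a: "R + 1 \<le> d1 (Inl x) (Inr y)"
      show "T (delta x) y = 0"
      proof (cases "y \<in> range ys")
        case True
        then obtain n where n: "y = ys n" by blast
        have "xs n \<noteq> x" using Pn[of n] a n unfolding Pr_def by auto
        then show ?thesis using n by (simp add: T_def pop_def gys delta_def)
      next
        case False then show ?thesis by (simp add: T_def pop_def)
      qed
    qed
    show "\<exists>S. bounded_op S \<and> finite_propagation d1 S \<and>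
        (\<forall>f\<in>ell2. ell2_norm (\<lambda>y. T f y - S f y) \<le> \<epsilon> * ell2_norm f)"
    proof (intro exI[of _ T] conjI ballI Tb)
      show "finite_propagation d1 T" using propT unfolding finite_propagation_def by blast
      fix f :: "'a \<Rightarrow> complex" assume "f \<in> ell2"
      have "ell2_norm (\<lambda>y. T f y - T f y) = 0" unfolding ell2_norm_def by simp
      then show "ell2_norm (\<lambda>y. T f y - T f y) \<le> \<epsilon> * ell2_norm f"
        using \<open>\<epsilon> > 0\<close> ell2_norm_nonneg[of f] by simp
    qed
  qed
  have T2: "T \<notin> M_space d2"
  proof
    assume "T \<in> M_space d2"
    then have H: "\<forall>\<epsilon>>0. \<exists>S. bounded_op S \<and> finite_propagation d2 S \<and>
        (\<forall>f\<in>ell2. ell2_norm (\<lambda>y. T f y - S f y) \<le> \<epsilon> * ell2_norm f)"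
      unfolding M_space_def by blast
    have h: "0 < (1/2::real)" by simp
    obtain S where S: "bounded_op S" "finite_propagation d2 S"
      "\<forall>f\<in>ell2. ell2_norm (\<lambda>y. T f y - S f y) \<le> (1/2) * ell2_norm f"
      using H[rule_format, OF h] by blast
    obtain L where L: "has_propagation_le d2 L S" using S(2) unfolding finite_propagation_def by blast
    define n where "n = nat \<lceil>L - G 0\<rceil>"
    have "G n \<ge> L" using Glin[of n] unfolding n_def by linarith
    then have S0: "S (delta (xs n)) (ys n) = 0" using L unfolding has_propagation_le_def G_def F_def by blast
    have T0: "T (delta (xs n)) (ys n) = 1" by (simp add: T_def pop_def gys delta_def)
    have ST: "S (delta (xs n)) \<in> ell2" "T (delta (xs n)) \<in> ell2"
      using S(1) Tb delta_ell2[of "xs n"] unfolding bounded_op_def by auto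
    have "norm ((\<lambda>y. T (delta (xs n)) y - S (delta (xs n)) y) (ys n))
        \<le> ell2_norm (\<lambda>y. T (delta (xs n)) y - S (delta (xs n)) y)"
      by (rule ell2_norm_ge[OF ell2_diff[OF ST(2) ST(1)]])
    also have "\<dots> \<le> 1/2" using S(3) delta_ell2[of "xs n"] delta_norm[of "xs n"] by auto
    finally show False using S0 T0 by simp
  qed
  show ?thesis using T1 T2 by blast
qed

theorem mainTheorem4:
  fixes dX :: "'a::countable \<Rightarrow> 'a \<Rightarrow> real"
    and d1 d2 :: "'a + 'b::countable \<Rightarrow> 'a + 'b \<Rightarrow> real"
  assumes "is_metric dX" and "discrete_metric dX"
    and "is_metric d1" and "is_metric d2"
    and "\<And>x x'. d1 (Inl x) (Inl x') = dX x x'"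
    and "\<And>x x'. d2 (Inl x) (Inl x') = dX x x'"
    and "\<And>y y'. d1 (Inr y) (Inr y') = d2 (Inr y) (Inr y')"
  shows "coarsely_equivalent d1 d2 \<longleftrightarrow> M_space d1 = M_space d2"
proof
  have nn1: "\<And>z z'. 0 \<le> d1 z z'" using assms(3) unfolding is_metric_def by auto
  have nn2: "\<And>z z'. 0 \<le> d2 z z'" using assms(4) unfolding is_metric_def by auto
  assume "coarsely_equivalent d1 d2"
  then obtain \<phi> :: "real \<Rightarrow> real" where ph: "mono_on {0..} \<phi>"
    "\<And>z z'. d1 z z' \<le> \<phi> (d2 z z')" "\<And>z z'. d2 z z' \<le> \<phi> (d1 z z')"
    unfolding coarsely_equivalent_def by blast
  have "finite_propagation d1 S \<longleftrightarrow> finite_propagation d2 S" for S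
    using fp_transfer[of \<phi> d1 d2 S] fp_transfer[of \<phi> d2 d1 S] ph nn1 nn2 by blast
  then show "M_space d1 = M_space d2" unfolding M_space_def by simp
next
  have agX: "\<And>x x'. d1 (Inl x) (Inl x') = d2 (Inl x) (Inl x')" using assms(5,6) by simp
  assume eq: "M_space d1 = M_space d2"
  show "coarsely_equivalent d1 d2"
  proof (rule coarse_from_bdd[OF assms(3,4)])
    fix t
    show "bdd_above {d2 z z' | z z'. d1 z z' \<le> t}"
      using core[OF assms(3,4) agX assms(7), of t] eq by metis
    show "bdd_above {d1 z z' | z z'. d2 z z' \<le> t}"
      using core[OF assms(4,3) agX[symmetric] assms(7)[symmetric], of t] eq by metis
  qed
qed

end
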